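(* Consider the linear time-invariant system $\dot{x}(t) = A x(t) + B u(t) + E w(t)$ with $A \in \mathbb{R}^{n\times n}$, $B \in \mathbb{R}^{n\times m}$, $E \in \mathbb{R}^{n\times r}$, input set $\mathcal{U}\subset\mathbb{R}^m$ and disturbance set $\mathcal{W}\subset\mathbb{R}^r$ (both zonotopes), and a target set $\mathcal{X}_{\text{end}}\subset\mathbb{R}^n$ given as a polytope. For every time $t \in [0,t_{\text{end}}]$, the time-point AE backward reachable set $$\mathcal{R}^{\forall\exists}(-t) := \big\{ x_0 \in \mathbb{R}^n \,\big|\, \forall u(\cdot)\in\mathbb{U}\; \exists w(\cdot)\in\mathbb{W}\colon \xi(t;x_0,u(\cdot),w(\cdot)) \in \mathcal{X}_{\text{end}} \big\}$$ satisfies $$\mathcal{R}^{\forall\exists}(-t) = e^{-At}\Big( \big( \mathcal{X}_{\text{end}} \oplus -\mathcal{Z}_{\mathcal{W}}(t) \big) \ominus \mathcal{Z}_{\mathcal{U}}(t) \Big).$$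
   Context: $\mathbb{U}$ is the set of all (measurable) input trajectories $u:[0,t_{\text{end}}]\to\mathcal{U}$ and $\mathbb{W}$ the set of all (measurable) disturbance trajectories $w:[0,t_{\text{end}}]\to\mathcal{W}$. $\xi(t;x_0,u(\cdot),w(\cdot)) = e^{At}x_0 + \int_0^t e^{A(t-\theta)}(Bu(\theta)+Ew(\theta))\,\mathrm{d}\theta$ is the solution at time $t$. For a set $\mathcal{S}\subset\mathbb{R}^n$, the particular solution is $\mathcal{Z}_{\mathcal{S}}(t) := \{\int_0^t e^{A(t-\theta)} s(\theta)\,\mathrm{d}\theta \mid s(\theta)\in\mathcal{S}\}$ (over measurable $s$), and $\mathcal{Z}_{\mathcal{U}}(t) := \mathcal{Z}_{B\mathcal{U}}(t)$, $\mathcal{Z}_{\mathcal{W}}(t) := \mathcal{Z}_{E\mathcal{W}}(t)$, where $B\mathcal{U}=\{Bu\mid u\in\mathcal{U}\}$. Set operations: $M\mathcal{S} = \{Ms \mid s\in\mathcal{S}\}$; $-\mathcal{S} = \{-s\mid s\in\mathcal{S}\}$; Minkowski sum $\mathcal{S}_1\oplus\mathcal{S}_2 = \{s_1+s_2\mid s_1\in\mathcal{S}_1, s_2\in\mathcal{S}_2\}$; Minkowski difference $\mathcal{S}_1\ominus\mathcal{S}_2 = \{s \mid \{s\}\oplus\mathcal{S}_2\subseteq\mathcal{S}_1\}$. A zonotope is $\{c+\sum_{i=1}^{\gamma} G_{(\cdot,i)}\alpha_i \mid \alpha_i\in[-1,1]\}$ for $c\in\mathbb{R}^n$, $G\in\mathbb{R}^{n\times\gamma}$;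 a polytope is $\{s \mid Ns\le d\}$ for $N\in\mathbb{R}^{c\times n}$, $d\in\mathbb{R}^c$. *)

theory Defs
  imports "HOL-Analysis.Analysis"
begin

section \<open>Matrix exponential\<close>

primrec matpow :: "real^'n^'n \<Rightarrow> nat \<Rightarrow> real^'n^'n" where
  "matpow M 0 = mat 1"
| "matpow M (Suc k) = M ** matpow M k"

text \<open>Matrix exponential via its power series e^M = sum_k M^k / k!.\<close>
definition mexp :: "real^'n^'n \<Rightarrow> real^'n^'n" where
  "mexp M = (\<Sum>k. (1 / (fact k :: real)) *\<^sub>R matpow M k)"

section \<open>Set operations\<close>

definition lin_image :: "real^'a^'b \<Rightarrow> (real^'a) set \<Rightarrow> (real^'b) set" where
  "lin_image M S = {M *v s | s. s \<in> S}"

definition set_neg :: "('a::ab_group_add) set \<Rightarrow> 'a set" where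
  "set_neg S = {- s | s. s \<in> S}"

definition mink_sum :: "('a::ab_group_add) set \<Rightarrow> 'a set \<Rightarrow> 'a set" where
  "mink_sum S1 S2 = {s1 + s2 | s1 s2. s1 \<in> S1 \<and> s2 \<in> S2}"

definition mink_diff :: "('a::ab_group_add) set \<Rightarrow> 'a set \<Rightarrow> 'a set" where
  "mink_diff S1 S2 = {s. mink_sum {s} S2 \<subseteq> S1}"

section \<open>Zonotopes and polytopes\<close>

text \<open>Zonotope with center c and finitely many generators (columns of G).\<close>
definition is_zonotope :: "(real^'n) set \<Rightarrow> bool" where
  "is_zonotope S \<longleftrightarrow> (\<exists>(c::real^'n) (gs::(real^'n) list).
     S = {c + (\<Sum>i<length gs. \<alpha> i *\<^sub>R gs ! i) | \<alpha>. \<forall>i<length gs. \<alpha> i \<in> {-1..1}})"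

text \<open>Polytope {s | N s <= d}: rows of N paired with entries of d.\<close>
definition is_polytope :: "(real^'n) set \<Rightarrow> bool" where
  "is_polytope S \<longleftrightarrow> (\<exists>(N::((real^'n) \<times> real) list).
     S = {s. \<forall>(a, b) \<in> set N. a \<bullet> s \<le> b})"

section \<open>Trajectories, solutions, particular solutions\<close>

text \<open>Measurable trajectories on [0,T] with values in S.\<close>
definition trajs :: "real \<Rightarrow> ('a::euclidean_space) set \<Rightarrow> (real \<Rightarrow> 'a) set" where
  "trajs T S = {f. f \<in> borel_measurable (lebesgue_on {0..T}) \<and> (\<forall>\<theta>\<in>{0..T}. f \<theta> \<in> S)}"

definition sol :: "real^'n^'n \<Rightarrow> real^'m^'n \<Rightarrow> real^'r^'n \<Rightarrow> real \<Rightarrow> real^'n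
    \<Rightarrow> (real \<Rightarrow> real^'m) \<Rightarrow> (real \<Rightarrow> real^'r) \<Rightarrow> real^'n" where
  "sol A B E t x0 u w = mexp (t *\<^sub>R A) *v x0
     + integral {0..t} (\<lambda>\<theta>. mexp ((t - \<theta>) *\<^sub>R A) *v (B *v u \<theta> + E *v w \<theta>))"

definition partsol :: "real^'n^'n \<Rightarrow> (real^'n) set \<Rightarrow> real \<Rightarrow> (real^'n) set" where
  "partsol A S t = {integral {0..t} (\<lambda>\<theta>. mexp ((t - \<theta>) *\<^sub>R A) *v s \<theta>) | s. s \<in> trajs t S}"

definition AE_backreach :: "real^'n^'n \<Rightarrow> real^'m^'n \<Rightarrow> real^'r^'n \<Rightarrow> (real^'m) set
    \<Rightarrow> (real^'r) set \<Rightarrow> (real^'n) set \<Rightarrow> real \<Rightarrow> real \<Rightarrow> (real^'n) set" where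
  "AE_backreach A B E U W Xend tend t = {x0. \<forall>u \<in> trajs tend U. \<exists>w \<in> trajs tend W.
      sol A B E t x0 u w \<in> Xend}"

end

theory Submission
  imports Defs
begin


typedef (overloaded) ('n::finite) sq = "UNIV :: ((real^'n) \<Rightarrow>\<^sub>L (real^'n)) set" by simp
setup_lifting type_definition_sq

instantiation sq :: (finite) real_normed_vector
begin
lift_definition norm_sq :: "'a sq \<Rightarrow> real" is norm .
lift_definition minus_sq :: "'a sq \<Rightarrow> 'a sq \<Rightarrow> 'a sq" is "(-)" .
lift_definition plus_sq :: "'a sq \<Rightarrow> 'a sq \<Rightarrow> 'a sq" is "(+)" .
lift_definition uminus_sq :: "'a sq \<Rightarrow> 'a sq" is "uminus" .
lift_definition zero_sq :: "'a sq" is "0" .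
lift_definition scaleR_sq :: "real \<Rightarrow> 'a sq \<Rightarrow> 'a sq" is "scaleR" .
definition dist_sq :: "'a sq \<Rightarrow> 'a sq \<Rightarrow> real" where "dist_sq a b = norm (a - b)"
definition uniformity_sq :: "('a sq \<times> 'a sq) filter" where
  "uniformity_sq = (INF e\<in>{0 <..}. principal {(x, y). dist x y < e})"
definition open_sq :: "'a sq set \<Rightarrow> bool"
  where "open_sq S = (\<forall>x\<in>S. \<forall>\<^sub>F (x', y) in uniformity. x' = x \<longrightarrow> y \<in> S)"
definition sgn_sq :: "'a sq \<Rightarrow> 'a sq" where "sgn_sq x = scaleR (inverse (norm x)) x"
instance
  apply standard
  unfolding dist_sq_def open_sq_def sgn_sq_def uniformity_sq_def
  apply (rule refl | (transfer, force simp: algebra_simps norm_triangle_ineq))+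
  done
end

instantiation sq :: (finite) real_normed_algebra_1
begin
lift_definition times_sq :: "'a sq \<Rightarrow> 'a sq \<Rightarrow> 'a sq" is "blinfun_compose" .
lift_definition one_sq :: "'a sq" is "id_blinfun" .
instance
  apply standard
  apply (transfer, rule blinfun_eqI, simp add: blinfun.bilinear_simps)
  apply (transfer, rule blinfun_eqI, simp add: blinfun.bilinear_simps)
  apply (transfer, rule blinfun_eqI, simp add: blinfun.bilinear_simps)
  apply (transfer, rule blinfun_eqI, simp add: blinfun.bilinear_simps)
  apply (transfer, rule blinfun_eqI, simp add: blinfun.bilinear_simps)
  apply (transfer, rule blinfun_eqI, simp add: blinfun.bilinear_simps)
  apply (transfer, rule blinfun_eqI, simp add: blinfun.bilinear_simps)
  apply transfer
  subgoal by (metis blinfun_apply_id_blinfun blinfun.zero_left axis_eq_0_iff one_neq_zero)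
  apply (transfer, rule norm_blinfun_compose)
  apply (transfer, simp)
  done
end


lemma dist_sq_rep: "dist x y = dist (Rep_sq x) (Rep_sq y)"
  by (simp add: dist_sq_def dist_norm norm_sq.rep_eq minus_sq.rep_eq)

instance sq :: (finite) banach
proof
  fix X :: "nat \<Rightarrow> 'a sq" assume "Cauchy X"
  then have "Cauchy (\<lambda>n. Rep_sq (X n))" by (simp add: Cauchy_def dist_sq_rep)
  then obtain L where L: "(\<lambda>n. Rep_sq (X n)) \<longlonglongrightarrow> L" using Cauchy_convergent_iff convergent_def by blast
  have "X \<longlonglongrightarrow> Abs_sq L"
    using L by (simp add: lim_sequentially dist_sq_rep Abs_sq_inverse)
  then show "convergent X" by (auto simp: convergent_def)
qed

definition Phi :: "real^'n^'n \<Rightarrow> 'n sq" where "Phi M = Abs_sq (Blinfun (\<lambda>x. M *v x))"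
definition Psi :: "'n sq \<Rightarrow> real^'n^'n" where "Psi X = matrix (blinfun_apply (Rep_sq X))"

lemma Phi_apply: "blinfun_apply (Rep_sq (Phi M)) x = M *v x"
  by (simp add: Phi_def Abs_sq_inverse bounded_linear_Blinfun_apply)

lemma Psi_apply: "Psi X *v x = blinfun_apply (Rep_sq X) x"
  unfolding Psi_def by (metis blinfun.bounded_linear_right matrix_vector_mul(3))

lemma Psi_Phi: "Psi (Phi M) = M"
  by (simp add: matrix_eq Psi_apply Phi_apply)

lemma sq_eqI: "(\<And>x. blinfun_apply (Rep_sq X) x = blinfun_apply (Rep_sq Y) x) \<Longrightarrow> X = Y"
  by (metis Rep_sq_inject blinfun_eqI)

lemma Phi_mult: "Phi (M ** N) = Phi M * Phi N"
  by (rule sq_eqI) (simp add: Phi_apply times_sq.rep_eq matrix_vector_mul_assoc)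

lemma Phi_one: "Phi (mat 1) = 1"
  by (rule sq_eqI) (simp add: Phi_apply one_sq.rep_eq)

lemma Phi_scaleR: "Phi (r *\<^sub>R M) = r *\<^sub>R Phi M"
  by (rule sq_eqI) (simp add: Phi_apply scaleR_sq.rep_eq blinfun.scaleR_left flip: scaleR_matrix_vector_assoc)

lemma Phi_pow: "Phi (matpow M k) = Phi M ^ k"
  by (induction k) (simp_all add: Phi_one Phi_mult)

lemma norm_vec_le_sum: "norm (v :: ('b::real_normed_vector)^'n) \<le> (\<Sum>i\<in>UNIV. norm (v $ i))"
  unfolding norm_vec_def by (rule L2_set_le_sum) simp

lemma Psi_bl: "bounded_linear (Psi :: 'n sq \<Rightarrow> real^'n^'n)"
proof (rule bounded_linear_intro[where K = "real (CARD('n) * CARD('n))"])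
  fix x y :: "'n sq" and r :: real
  show "Psi (x + y) = Psi x + Psi y"
    by (simp add: matrix_eq Psi_apply plus_sq.rep_eq matrix_vector_mult_add_rdistrib blinfun.add_left)
  show "Psi (r *\<^sub>R x) = r *\<^sub>R Psi x"
    by (simp add: matrix_eq Psi_apply scaleR_sq.rep_eq blinfun.scaleR_left flip: scaleR_matrix_vector_assoc)
  have c: "\<bar>Psi x $ i $ j\<bar> \<le> norm x" for i j
    unfolding Psi_def norm_sq.rep_eq norm_blinfun.rep_eq
    by (rule component_le_onorm) (rule bounded_linear.linear[OF blinfun.bounded_linear_right])
  have "norm (Psi x) \<le> (\<Sum>i\<in>UNIV. norm (Psi x $ i))" by (rule norm_vec_le_sum)
  also have "\<dots> \<le> (\<Sum>i\<in>(UNIV::'n set). \<Sum>j\<in>(UNIV::'n set). norm x)"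
  proof (rule sum_mono)
    fix i
    have "norm (Psi x $ i) \<le> (\<Sum>j\<in>UNIV. \<bar>Psi x $ i $ j\<bar>)" by (rule norm_le_l1_cart)
    also have "\<dots> \<le> (\<Sum>j\<in>(UNIV::'n set). norm x)" by (rule sum_mono) (rule c)
    finally show "norm (Psi x $ i) \<le> (\<Sum>j\<in>(UNIV::'n set). norm x)" .
  qed
  also have "\<dots> = norm x * real (CARD('n) * CARD('n))" by simp
  finally show "norm (Psi x) \<le> norm x * real (CARD('n) * CARD('n))" .
qed

lemma mexp_Psi: "mexp M = Psi (exp (Phi M))"
proof -
  have "(\<lambda>k. Phi M ^ k /\<^sub>R fact k) sums exp (Phi M)"
    unfolding exp_def by (rule summable_sums, rule summable_exp_generic)
  from bounded_linear.sums[OF Psi_bl this]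
  have "(\<lambda>k. Psi (Phi M ^ k /\<^sub>R fact k)) sums Psi (exp (Phi M))" .
  moreover have "Psi (Phi M ^ k /\<^sub>R fact k) = (1 / (fact k :: real)) *\<^sub>R matpow M k" for k
    by (simp add: Phi_pow[symmetric] Phi_scaleR[symmetric] Psi_Phi divide_inverse_commute flip: Phi_scaleR)
  ultimately show ?thesis unfolding mexp_def by (simp add: sums_iff)
qed

lemma mexp_apply: "mexp M *v x = blinfun_apply (Rep_sq (exp (Phi M))) x"
  by (simp add: mexp_Psi Psi_apply)

lemma mexp_inv: "mexp ((- t) *\<^sub>R A) *v (mexp (t *\<^sub>R A) *v x) = x"
proof -
  have "exp ((-t) *\<^sub>R Phi A) * exp (t *\<^sub>R Phi A) = exp ((-t) *\<^sub>R Phi A + t *\<^sub>R Phi A)"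
    by (rule exp_add_commuting[symmetric]) simp
  then have e: "exp ((-t) *\<^sub>R Phi A) * exp (t *\<^sub>R Phi A) = 1" by simp
  have "blinfun_apply (Rep_sq (exp ((-t) *\<^sub>R Phi A))) (blinfun_apply (Rep_sq (exp (t *\<^sub>R Phi A))) x)
     = blinfun_apply (Rep_sq (exp ((-t) *\<^sub>R Phi A) * exp (t *\<^sub>R Phi A))) x"
    by (simp add: times_sq.rep_eq)
  also have "\<dots> = x" by (simp only: e one_sq.rep_eq blinfun_apply_id_blinfun)
  finally show ?thesis unfolding mexp_apply Phi_scaleR .
qed

lemma mexp_inv': "mexp (t *\<^sub>R A) *v (mexp ((- t) *\<^sub>R A) *v x) = x"
  using mexp_inv[of "-t" A x] by simp


lemma cont_mv: "continuous_on UNIV (\<lambda>p. fst p *v (snd p :: real^'n) :: real^'m)"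
  unfolding matrix_vector_mult_def
  by (intro continuous_intros)

lemma cont_mexp: "continuous_on UNIV (\<lambda>\<theta>::real. mexp ((t - \<theta>) *\<^sub>R A))"
proof -
  have "continuous_on UNIV (\<lambda>\<theta>::real. exp (\<theta> *\<^sub>R Phi A))"
    using exp_scaleR_has_vector_derivative_right has_vector_derivative_continuous
    by (metis continuous_at_imp_continuous_on)
  then have "continuous_on UNIV ((\<lambda>\<theta>::real. exp (\<theta> *\<^sub>R Phi A)) \<circ> (\<lambda>\<theta>. t - \<theta>))"
    by (intro continuous_on_compose continuous_intros) (auto elim: continuous_on_subset)
  then have "continuous_on UNIV (Psi \<circ> ((\<lambda>\<theta>::real. exp (\<theta> *\<^sub>R Phi A)) \<circ> (\<lambda>\<theta>. t - \<theta>)))"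
    by (rule continuous_on_compose[OF _ linear_continuous_on[OF Psi_bl]])
  then show ?thesis by (simp add: o_def mexp_Psi Phi_scaleR)
qed

lemma int_K:
  fixes v :: "real \<Rightarrow> real^'n" and A :: "real^'n^'n"
  assumes v: "v \<in> borel_measurable (lebesgue_on {0..t})" and b: "\<And>\<theta>. \<theta> \<in> {0..t} \<Longrightarrow> norm (v \<theta>) \<le> C"
  shows "(\<lambda>\<theta>. mexp ((t - \<theta>) *\<^sub>R A) *v v \<theta>) integrable_on {0..t}"
proof (rule measurable_bounded_by_integrable_imp_integrable)
  have M: "(\<lambda>\<theta>. mexp ((t - \<theta>) *\<^sub>R A)) \<in> borel_measurable (lebesgue_on {0..t})"
    by (rule continuous_imp_measurable_on_sets_lebesgue) (auto intro: continuous_on_subset[OF cont_mexp])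
  show "(\<lambda>\<theta>. mexp ((t - \<theta>) *\<^sub>R A) *v v \<theta>) \<in> borel_measurable (lebesgue_on {0..t})"
    by (rule borel_measurable_continuous_Pair[OF M v, where H="(*v)"]) (rule cont_mv)
  show "(\<lambda>\<theta>. exp (t * norm (Phi A)) * C) integrable_on {0..t}" by (rule integrable_const_ivl)
  show "{0..t} \<in> sets lebesgue" by simp
  fix \<theta> assume th: "\<theta> \<in> {0..t}"
  have "norm (mexp ((t - \<theta>) *\<^sub>R A) *v v \<theta>) \<le> norm (exp ((t - \<theta>) *\<^sub>R Phi A)) * norm (v \<theta>)"
    unfolding mexp_apply norm_sq.rep_eq Phi_scaleR by (rule norm_blinfun)
  also have "\<dots> \<le> exp (t * norm (Phi A)) * C"
  proof (rule mult_mono)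
    have "norm (exp ((t - \<theta>) *\<^sub>R Phi A)) \<le> exp (norm ((t - \<theta>) *\<^sub>R Phi A))" by (rule norm_exp)
    also have "\<dots> \<le> exp (t * norm (Phi A))"
      using th by (auto intro!: mult_right_mono)
    finally show "norm (exp ((t - \<theta>) *\<^sub>R Phi A)) \<le> exp (t * norm (Phi A))" .
  qed (use b th in auto)
  finally show "norm (mexp ((t - \<theta>) *\<^sub>R A) *v v \<theta>) \<le> exp (t * norm (Phi A)) * C" .
qed



definition Zs :: "('a::euclidean_space) list \<Rightarrow> 'a set" where
  "Zs hs = {(\<Sum>i<length hs. \<alpha> i *\<^sub>R hs ! i) | \<alpha>. \<forall>i<length hs. \<alpha> i \<in> {-1..1}}"

lemma Zs_Nil: "Zs [] = {0}"
  by (auto simp: Zs_def)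

lemma Zs_Cons: "Zs (h # hs) = {b *\<^sub>R h + y | b y. b \<in> {-1..1} \<and> y \<in> Zs hs}"
proof (intro set_eqI iffI)
  fix z assume "z \<in> Zs (h # hs)"
  then obtain \<alpha> where a: "\<forall>i<Suc (length hs). \<alpha> i \<in> {-1..1}"
    and z: "z = (\<Sum>i<Suc (length hs). \<alpha> i *\<^sub>R (h # hs) ! i)" by (auto simp: Zs_def)
  have "z = \<alpha> 0 *\<^sub>R h + (\<Sum>i<length hs. \<alpha> (Suc i) *\<^sub>R hs ! i)"
    unfolding z sum.lessThan_Suc_shift by simp
  moreover have "(\<Sum>i<length hs. \<alpha> (Suc i) *\<^sub>R hs ! i) \<in> Zs hs"
    using a unfolding Zs_def by auto
  moreover have "\<alpha> 0 \<in> {-1..1}" using a by auto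
  ultimately show "z \<in> {b *\<^sub>R h + y | b y. b \<in> {-1..1} \<and> y \<in> Zs hs}" by blast
next
  fix z assume "z \<in> {b *\<^sub>R h + y | b y. b \<in> {-1..1} \<and> y \<in> Zs hs}"
  then obtain b \<beta> where b: "b \<in> {-1..1}" and be: "\<forall>i<length hs. \<beta> i \<in> {-1..1}"
    and z: "z = b *\<^sub>R h + (\<Sum>i<length hs. \<beta> i *\<^sub>R hs ! i)" by (auto simp: Zs_def)
  define \<alpha> where "\<alpha> i = (case i of 0 \<Rightarrow> b | Suc j \<Rightarrow> \<beta> j)" for i
  have "z = (\<Sum>i<Suc (length hs). \<alpha> i *\<^sub>R (h # hs) ! i)"
    unfolding z sum.lessThan_Suc_shift by (simp add: \<alpha>_def)
  moreover have "\<forall>i<Suc (length hs). \<alpha> i \<in> {-1..1}"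
    using b be by (auto simp: \<alpha>_def split: nat.split)
  ultimately show "z \<in> Zs (h # hs)" unfolding Zs_def by (auto simp del: atLeastAtMost_iff)
qed

lemma Zs_image: "Zs (h # hs) = (\<lambda>p. fst p *\<^sub>R h + snd p) ` ({-1..1} \<times> Zs hs)"
  unfolding Zs_Cons by force

lemma compact_Zs: "compact (Zs hs)"
proof (induction hs)
  case Nil then show ?case by (simp add: Zs_Nil)
next
  case (Cons h hs)
  show ?case unfolding Zs_image
    by (intro compact_continuous_image compact_Times Cons continuous_intros compact_Icc)
qed

lemma Zs_sel:
  fixes hs :: "('a::euclidean_space) list"
  shows "\<exists>a :: 'a \<Rightarrow> nat \<Rightarrow> real. (\<forall>i. (\<lambda>z. a z i) \<in> borel_measurable borel) \<and>
    (\<forall>z\<in>Zs hs. (\<forall>i<length hs. a z i \<in> {-1..1}) \<and> z = (\<Sum>i<length hs. a z i *\<^sub>R hs ! i))"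
proof (induction hs)
  case Nil
  show ?case by (rule exI[of _ "\<lambda>z i. 0"]) (simp add: Zs_Nil)
next
  case (Cons h hs)
  then obtain a :: "'a \<Rightarrow> nat \<Rightarrow> real" where am: "\<And>i. (\<lambda>z. a z i) \<in> borel_measurable borel"
    and ap: "\<And>z. z \<in> Zs hs \<Longrightarrow> (\<forall>i<length hs. a z i \<in> {-1..1}) \<and> z = (\<Sum>i<length hs. a z i *\<^sub>R hs ! i)"
    by blast
  define Z1 where "Z1 = Zs (h # hs)"
  define S where "S z = {b \<in> {-1..1}. z - b *\<^sub>R h \<in> Zs hs}" for z
  define \<beta> where "\<beta> z = (if z \<in> Z1 then Inf (S z) else 0)" for z
  have Sclosed: "closed (S z)" for z
  proof -
    have "S z = {-1..1} \<inter> (\<lambda>b. z - b *\<^sub>R h) -` Zs hs" by (auto simp: S_def)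
    moreover have "closed ((\<lambda>b. z - b *\<^sub>R h) -` Zs hs)"
      by (intro continuous_closed_vimage compact_imp_closed compact_Zs continuous_intros)
    ultimately show ?thesis by auto
  qed
  have Sne: "S z \<noteq> {}" if "z \<in> Z1" for z
    using that unfolding Z1_def Zs_Cons S_def by force
  have Sbdd: "bdd_below (S z)" for z
    by (rule bdd_belowI[of _ "-1"]) (auto simp: S_def)
  have bS: "\<beta> z \<in> S z" if "z \<in> Z1" for z
    using closed_contains_Inf[OF Sne[OF that] Sbdd Sclosed] that by (simp add: \<beta>_def)
  have ble: "\<beta> z \<le> r \<longleftrightarrow> (\<exists>b\<in>S z. b \<le> r)" if "z \<in> Z1" for z r
    using bS[OF that] cInf_lower[OF _ Sbdd] that by (auto simp: \<beta>_def) (meson order_trans)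
  define C where "C r = (\<lambda>p. fst p *\<^sub>R h + snd p) ` ({-1..min 1 r} \<times> Zs hs)" for r
  have Ccl: "closed (C r)" for r
    unfolding C_def
    by (intro compact_imp_closed compact_continuous_image compact_Times compact_Zs continuous_intros compact_Icc)
  have Z1cl: "closed Z1" unfolding Z1_def by (intro compact_imp_closed compact_Zs)
  have Ceq: "z \<in> C r \<longleftrightarrow> (\<exists>b\<in>S z. b \<le> r)" for z r
  proof
    assume "z \<in> C r"
    then obtain b y where "b \<in> {-1..min 1 r}" "y \<in> Zs hs" "z = b *\<^sub>R h + y" by (auto simp: C_def)
    then show "\<exists>b\<in>S z. b \<le> r" by (intro bexI[of _ b]) (auto simp: S_def)
  next
    assume "\<exists>b\<in>S z. b \<le> r"
    then obtain b where "b \<in> S z" "b \<le> r" by blast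
    then show "z \<in> C r" unfolding C_def S_def
      by (intro image_eqI[of _ _ "(b, z - b *\<^sub>R h)"]) auto
  qed
  have bm: "\<beta> \<in> borel_measurable borel"
  proof (subst borel_measurable_iff_le, intro allI)
    fix r
    have "{w \<in> space borel. \<beta> w \<le> r} = (Z1 \<inter> C r) \<union> (if 0 \<le> r then UNIV - Z1 else {})"
      using ble Ceq by (auto simp: \<beta>_def)
    also have "\<dots> \<in> sets borel"
      using Z1cl Ccl by auto
    finally show "{w \<in> space borel. \<beta> w \<le> r} \<in> sets borel" .
  qed
  define a' where "a' z i = (case i of 0 \<Rightarrow> \<beta> z | Suc j \<Rightarrow> a (z - \<beta> z *\<^sub>R h) j)" for z i
  show ?case
  proof (intro exI[of _ a'] conjI ballI allI)
    fix i
    show "(\<lambda>z. a' z i) \<in> borel_measurable borel"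
    proof (cases i)
      case 0 then show ?thesis using bm by (simp add: a'_def)
    next
      case (Suc j)
      have "(\<lambda>z. z - \<beta> z *\<^sub>R h) \<in> borel_measurable borel"
        using bm by measurable
      from measurable_compose[OF this am[of j]] show ?thesis by (simp add: a'_def Suc)
    qed
  next
    fix z assume z: "z \<in> Zs (h # hs)"
    then have z1: "z \<in> Z1" by (simp add: Z1_def)
    have bS': "\<beta> z \<in> {-1..1}" "z - \<beta> z *\<^sub>R h \<in> Zs hs" using bS[OF z1] by (auto simp: S_def)
    note ap' = ap[OF bS'(2)]
    show "i < length (h # hs) \<longrightarrow> a' z i \<in> {-1..1}" for i
      using bS'(1) ap' by (auto simp: a'_def split: nat.split)
    have "z = \<beta> z *\<^sub>R h + (z - \<beta> z *\<^sub>R h)" by simp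
    also have "\<dots> = \<beta> z *\<^sub>R h + (\<Sum>i<length hs. a' z (Suc i) *\<^sub>R hs ! i)"
      using ap' by (simp add: a'_def)
    also have "\<dots> = (\<Sum>i<length (h # hs). a' z i *\<^sub>R (h # hs) ! i)"
      unfolding length_Cons sum.lessThan_Suc_shift by (simp add: a'_def)
    finally show "z = (\<Sum>i<length (h # hs). a' z i *\<^sub>R (h # hs) ! i)" .
  qed
qed



lemma mv_sum: "(B::real^'n^'m) *v (\<Sum>i<(n::nat). \<alpha> i *\<^sub>R g i) = (\<Sum>i<n. \<alpha> i *\<^sub>R (B *v g i))"
  by (induction n) (simp_all add: matrix_vector_right_distrib matrix_vector_mult_scaleR)

lemma zono_Zs: "is_zonotope U \<Longrightarrow> \<exists>c gs. U = (\<lambda>z. c + z) ` Zs gs"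
proof -
  assume "is_zonotope U"
  then obtain c gs where U: "U = {c + (\<Sum>i<length gs. \<alpha> i *\<^sub>R gs ! i) | \<alpha>. \<forall>i<length gs. \<alpha> i \<in> {-1..1}}"
    unfolding is_zonotope_def by blast
  have "U = (\<lambda>z. c + z) ` Zs gs" unfolding U Zs_def by blast
  then show ?thesis by blast
qed

lemma zero_Zs: "0 \<in> Zs hs"
  unfolding Zs_def by (auto intro!: exI[of _ "\<lambda>i. 0::real"])

lemma zono_compact: "is_zonotope U \<Longrightarrow> compact U"
proof -
  assume "is_zonotope U"
  then obtain c gs where "U = (\<lambda>z. c + z) ` Zs gs" using zono_Zs by blast
  then show ?thesis by (auto intro!: compact_continuous_image compact_Zs continuous_intros)
qed

lemma lin_image_eq: "lin_image B U = (\<lambda>x. B *v x) ` U"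
  by (auto simp: lin_image_def)

lemma lin_image_bounded: "is_zonotope U \<Longrightarrow> bounded (lin_image B U)"
  unfolding lin_image_eq
  by (intro compact_imp_bounded compact_continuous_image zono_compact) (auto intro: linear_continuous_on)

lemma mv_meas:
  assumes "u \<in> borel_measurable M"
  shows "(\<lambda>\<theta>. (B :: real^'m^'n) *v u \<theta>) \<in> borel_measurable M"
proof -
  have "(\<lambda>x. B *v x) \<in> borel_measurable borel"
    by (rule borel_measurable_continuous_onI) (rule linear_continuous_on, simp)
  from measurable_compose[OF assms this] show ?thesis .
qed

lemma selU:
  fixes U :: "(real^'m) set" and B :: "real^'m^'n"
  assumes zU: "is_zonotope U" and sm: "s \<in> borel_measurable (lebesgue_on {0..t})"
    and sv: "\<forall>\<theta>\<in>{0..t}. s \<theta> \<in> lin_image B U" and tT: "t \<le> T"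
  shows "\<exists>u \<in> trajs T U. \<forall>\<theta>\<in>{0..t}. B *v u \<theta> = s \<theta>"
proof -
  obtain c gs where U: "U = {c + (\<Sum>i<length gs. \<alpha> i *\<^sub>R gs ! i) | \<alpha>. \<forall>i<length gs. \<alpha> i \<in> {-1..1}}"
    using zU unfolding is_zonotope_def by blast
  define hs where "hs = map (\<lambda>g. B *v g) gs"
  obtain a :: "real^'n \<Rightarrow> nat \<Rightarrow> real" where am: "\<And>i. (\<lambda>z. a z i) \<in> borel_measurable borel"
    and ap: "\<And>z. z \<in> Zs hs \<Longrightarrow> (\<forall>i<length hs. a z i \<in> {-1..1}) \<and> z = (\<Sum>i<length hs. a z i *\<^sub>R hs ! i)"
    using Zs_sel[of hs] by blast
  define s' where "s' \<theta> = (if \<theta> \<in> {0..t} then s \<theta> - B *v c else 0)" for \<theta>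
  have s'Z: "s' \<theta> \<in> Zs hs" for \<theta>
  proof (cases "\<theta> \<in> {0..t}")
    case True
    then obtain \<alpha> where al: "\<forall>i<length gs. \<alpha> i \<in> {-1..1}" and e: "s \<theta> = B *v (c + (\<Sum>i<length gs. \<alpha> i *\<^sub>R gs ! i))"
      using sv unfolding U lin_image_def by blast
    have "s' \<theta> = (\<Sum>i<length hs. \<alpha> i *\<^sub>R hs ! i)"
      using True e by (simp add: s'_def hs_def matrix_vector_right_distrib mv_sum)
    then show ?thesis using al unfolding Zs_def hs_def by auto
  next
    case False
    then have "s' \<theta> = 0" by (simp only: s'_def if_not_P[OF False] if_False)
    then show ?thesis using zero_Zs by simp
  qed
  define u where "u \<theta> = c + (\<Sum>i<length gs. a (s' \<theta>) i *\<^sub>R gs ! i)" for \<theta>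
  have s'm: "s' \<in> borel_measurable (lebesgue_on {0..T})"
  proof -
    have "(\<lambda>\<theta>. s \<theta> - B *v c) \<in> borel_measurable (lebesgue_on {0..t})" using sm by (intro borel_measurable_diff borel_measurable_const)
    then show ?thesis unfolding s'_def
      using borel_measurable_if_lebesgue_on[of "{0..t}" "{0..T}" "\<lambda>\<theta>. s \<theta> - B *v c"] tT by auto
  qed
  have um: "u \<in> borel_measurable (lebesgue_on {0..T})"
  proof -
    have "(\<lambda>\<theta>. a (s' \<theta>) i) \<in> borel_measurable (lebesgue_on {0..T})" for i
      using measurable_compose[OF s'm am[of i]] by simp
    then show ?thesis unfolding u_def by (intro borel_measurable_add borel_measurable_sum borel_measurable_scaleR borel_measurable_const) auto
  qed
  have uU: "u \<theta> \<in> U" for \<theta>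
  proof -
    have "\<forall>i<length gs. a (s' \<theta>) i \<in> {-1..1}" using ap[OF s'Z[of \<theta>]] by (simp add: hs_def)
    then show ?thesis unfolding U u_def by blast
  qed
  have Bu: "B *v u \<theta> = s \<theta>" if "\<theta> \<in> {0..t}" for \<theta>
  proof -
    have "B *v u \<theta> = B *v c + (\<Sum>i<length hs. a (s' \<theta>) i *\<^sub>R hs ! i)"
      by (simp add: u_def hs_def matrix_vector_right_distrib mv_sum)
    also have "\<dots> = B *v c + s' \<theta>" using ap[OF s'Z[of \<theta>]] by simp
    also have "\<dots> = s \<theta>" using that by (simp add: s'_def)
    finally show ?thesis .
  qed
  show ?thesis using um uU Bu by (auto simp: trajs_def)
qed


lemma traj_restrict:
  assumes "u \<in> trajs T U" "t \<le> T"
  shows "(\<lambda>\<theta>. (B :: real^'m^'n) *v u \<theta>) \<in> borel_measurable (lebesgue_on {0..t})"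
proof -
  have "u \<in> borel_measurable (lebesgue_on {0..T})" using assms by (simp add: trajs_def)
  then have "u \<in> borel_measurable (lebesgue_on {0..t})"
    by (rule measurable_restrict_mono) (use assms in auto)
  then show ?thesis by (rule mv_meas)
qed

lemma intU:
  fixes U :: "(real^'m) set" and B :: "real^'m^'n"
  assumes "is_zonotope U" "u \<in> trajs T U" "t \<le> T"
  shows "(\<lambda>\<theta>. mexp ((t - \<theta>) *\<^sub>R A) *v (B *v u \<theta>)) integrable_on {0..t}"
proof -
  obtain C where C: "\<And>x. x \<in> lin_image B U \<Longrightarrow> norm x \<le> C"
    using lin_image_bounded[OF assms(1), of B] unfolding bounded_iff by blast
  show ?thesis
  proof (rule int_K)
    show "(\<lambda>\<theta>. B *v u \<theta>) \<in> borel_measurable (lebesgue_on {0..t})" by (rule traj_restrict[OF assms(2,3)])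
    fix \<theta> :: real assume "\<theta> \<in> {0..t}"
    then have "u \<theta> \<in> U" using assms(2,3) by (auto simp: trajs_def)
    then show "norm (B *v u \<theta>) \<le> C" by (intro C) (auto simp: lin_image_def)
  qed
qed

lemma partsol_eq:
  fixes U :: "(real^'m) set" and B :: "real^'m^'n"
  assumes zU: "is_zonotope U" and tT: "t \<le> T"
  shows "partsol A (lin_image B U) t = (\<lambda>u. integral {0..t} (\<lambda>\<theta>. mexp ((t - \<theta>) *\<^sub>R A) *v (B *v u \<theta>))) ` trajs T U"
proof (intro set_eqI iffI)
  fix z assume "z \<in> partsol A (lin_image B U) t"
  then obtain s where s: "s \<in> trajs t (lin_image B U)" and z: "z = integral {0..t} (\<lambda>\<theta>. mexp ((t - \<theta>) *\<^sub>R A) *v s \<theta>)"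
    by (auto simp: partsol_def)
  obtain u where u: "u \<in> trajs T U" and Bu: "\<forall>\<theta>\<in>{0..t}. B *v u \<theta> = s \<theta>"
  proof -
    have sm: "s \<in> borel_measurable (lebesgue_on {0..t})" and sv: "\<forall>\<theta>\<in>{0..t}. s \<theta> \<in> lin_image B U"
      using s by (auto simp: trajs_def)
    show ?thesis using selU[OF zU sm sv tT] that by blast
  qed
  have "z = integral {0..t} (\<lambda>\<theta>. mexp ((t - \<theta>) *\<^sub>R A) *v (B *v u \<theta>))"
    unfolding z by (rule integral_cong) (simp add: Bu)
  then show "z \<in> (\<lambda>u. integral {0..t} (\<lambda>\<theta>. mexp ((t - \<theta>) *\<^sub>R A) *v (B *v u \<theta>))) ` trajs T U"
    using u by blast
next
  fix z assume "z \<in> (\<lambda>u. integral {0..t} (\<lambda>\<theta>. mexp ((t - \<theta>) *\<^sub>R A) *v (B *v u \<theta>))) ` trajs T U"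
  then obtain u where u: "u \<in> trajs T U" and z: "z = integral {0..t} (\<lambda>\<theta>. mexp ((t - \<theta>) *\<^sub>R A) *v (B *v u \<theta>))"
    by blast
  have "(\<lambda>\<theta>. B *v u \<theta>) \<in> trajs t (lin_image B U)"
    using traj_restrict[OF u tT, of B] u tT by (auto simp: trajs_def lin_image_def)
  then show "z \<in> partsol A (lin_image B U) t" unfolding partsol_def z
    by (intro CollectI exI[of _ "\<lambda>\<theta>. B *v u \<theta>"]) simp
qed

lemma md_iff:
  "y \<in> mink_diff (mink_sum X (set_neg Z2)) Z1 \<longleftrightarrow> (\<forall>z\<in>Z1. \<exists>z'\<in>Z2. y + z + z' \<in> X)"
proof
  assume h: "y \<in> mink_diff (mink_sum X (set_neg Z2)) Z1"
  show "\<forall>z\<in>Z1. \<exists>z'\<in>Z2. y + z + z' \<in> X"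
  proof
    fix z assume "z \<in> Z1"
    then have "y + z \<in> mink_sum X (set_neg Z2)" using h by (auto simp: mink_diff_def mink_sum_def)
    then obtain x z' where "x \<in> X" "z' \<in> Z2" "y + z = x + - z'" by (auto simp: mink_sum_def set_neg_def)
    then show "\<exists>z'\<in>Z2. y + z + z' \<in> X" by (intro bexI[of _ z']) (simp_all add: algebra_simps)
  qed
next
  assume h: "\<forall>z\<in>Z1. \<exists>z'\<in>Z2. y + z + z' \<in> X"
  show "y \<in> mink_diff (mink_sum X (set_neg Z2)) Z1"
    unfolding mink_diff_def
  proof (intro CollectI subsetI)
    fix v assume "v \<in> mink_sum {y} Z1"
    then obtain z where z: "z \<in> Z1" "v = y + z" by (auto simp: mink_sum_def)
    then obtain z' where "z' \<in> Z2" "y + z + z' \<in> X" using h by blast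
    moreover have "v = (y + z + z') + - z'" using z by simp
    ultimately show "v \<in> mink_sum X (set_neg Z2)" unfolding mink_sum_def set_neg_def by blast
  qed
qed

theorem proposition3:
  fixes A :: "real^'n^'n" and B :: "real^'m^'n" and E :: "real^'r^'n"
    and U :: "(real^'m) set" and W :: "(real^'r) set" and Xend :: "(real^'n) set"
    and tend t :: real
  assumes "is_zonotope U" and "is_zonotope W" and "is_polytope Xend"
    and "t \<in> {0..tend}"
  shows "AE_backreach A B E U W Xend tend t =
    lin_image (mexp ((- t) *\<^sub>R A))
      (mink_diff (mink_sum Xend (set_neg (partsol A (lin_image E W) t)))
                 (partsol A (lin_image B U) t))"
proof -
  have tT: "t \<le> tend" using assms(4) by simp
  define IU where "IU u = integral {0..t} (\<lambda>\<theta>. mexp ((t - \<theta>) *\<^sub>R A) *v (B *v u \<theta>))" for u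
  define IW where "IW w = integral {0..t} (\<lambda>\<theta>. mexp ((t - \<theta>) *\<^sub>R A) *v (E *v w \<theta>))" for w
  have sol_eq: "sol A B E t x0 u w = mexp (t *\<^sub>R A) *v x0 + IU u + IW w"
    if "u \<in> trajs tend U" "w \<in> trajs tend W" for x0 u w
    unfolding sol_def IU_def IW_def
    by (simp add: matrix_vector_right_distrib integral_add[OF intU[OF assms(1) that(1) tT] intU[OF assms(2) that(2) tT]] add.assoc)
  have ZU: "partsol A (lin_image B U) t = IU ` trajs tend U"
    unfolding IU_def by (rule partsol_eq[OF assms(1) tT])
  have ZW: "partsol A (lin_image E W) t = IW ` trajs tend W"
    unfolding IW_def by (rule partsol_eq[OF assms(2) tT])
  show ?thesis
  proof (rule set_eqI)
    fix x0
    let ?y = "mexp (t *\<^sub>R A) *v x0"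
    let ?D = "mink_diff (mink_sum Xend (set_neg (partsol A (lin_image E W) t))) (partsol A (lin_image B U) t)"
    have "x0 \<in> AE_backreach A B E U W Xend tend t \<longleftrightarrow>
        (\<forall>u\<in>trajs tend U. \<exists>w\<in>trajs tend W. ?y + IU u + IW w \<in> Xend)"
      unfolding AE_backreach_def using sol_eq by auto
    also have "\<dots> \<longleftrightarrow> (\<forall>z\<in>partsol A (lin_image B U) t. \<exists>z'\<in>partsol A (lin_image E W) t. ?y + z + z' \<in> Xend)"
      unfolding ZU ZW by blast
    also have "\<dots> \<longleftrightarrow> ?y \<in> ?D" by (rule md_iff[symmetric])
    also have "\<dots> \<longleftrightarrow> x0 \<in> lin_image (mexp ((- t) *\<^sub>R A)) ?D"
    proof
      assume "?y \<in> ?D"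
      moreover have "x0 = mexp ((- t) *\<^sub>R A) *v ?y" by (simp only: mexp_inv)
      ultimately show "x0 \<in> lin_image (mexp ((- t) *\<^sub>R A)) ?D" unfolding lin_image_def by blast
    next
      assume "x0 \<in> lin_image (mexp ((- t) *\<^sub>R A)) ?D"
      then obtain s where "s \<in> ?D" "x0 = mexp ((- t) *\<^sub>R A) *v s" unfolding lin_image_def by blast
      moreover have "?y = s" using calculation(2) by (simp only: mexp_inv')
      ultimately show "?y \<in> ?D" by simp
    qed
    finally show "x0 \<in> AE_backreach A B E U W Xend tend t \<longleftrightarrow> x0 \<in> lin_image (mexp ((- t) *\<^sub>R A)) ?D" .
  qed
qed

end
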